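(* Let $E$ be any graph, let $V\subseteq E^0$, and let $H\subseteq E^0$ be a hereditary set such that $\overline{V}\subseteq H\subseteq R(T(V))$. For $v\in H$, let $P_v(T(V))$ be the set of paths of $E$ originating at $v$ and terminating at a vertex of $T(V)$ such that no vertex of the path, except its range, lies in $T(V)$. Then the following are equivalent: (1) $H=\overline{V}$; (2) the set $H\setminus T(V)$ contains no infinite emitters, and every infinite path all of whose vertices lie in $H$ contains a vertex of $T(V)$; (3) the set $P_v(T(V))$ is finite for every $v\in H$.
   Context: A (directed) graph $E=(E^0,E^1,\mathbf{s},\mathbf{r})$ has vertex set $E^0$, edge set $E^1$ (of arbitrary cardinality) and source and range maps $\mathbf{s},\mathbf{r}:E^1\to E^0$. A sink is a vertex emitting no edges, an infinite emitter is a vertex emitting infinitely many edges, and a vertex is regular if it is neither. A path is a single vertex or a finite sequence of edges $e_1\dots e_n$ with $\mathbf{r}(e_i)=\mathbf{s}(e_{i+1})$; an infinite path is an infinite such sequence; $p^0$ denotes the set of vertices on a (finite or infinite) path $p$. Write $u\geq v$ if there is a path from $u$ to $v$. For $V\subseteq E^0$, $T(V)=\{u\in E^0: v\geq u \text{ for some } v\in V\}$ and $R(V)=\{u\in E^0: u\geq v\text{ for some }v\in V\}$. A set $H\subseteq E^0$ is hereditary if $T(H)\subseteq H$, and saturated if every regular vertex $v$ with $\mathbf{r}(\mathbf{s}^{-1}(v))\subseteq H$ lies in $H$. For $V\subseteq E^0$, $\overline{V}$ denotes the smallest hereditary and saturated set containing $V$ (equivalently, the smallest saturated set containing $T(V)$).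 *)

theory Defs
  imports Main
begin

definition graph :: "'v set \<Rightarrow> 'e set \<Rightarrow> ('e \<Rightarrow> 'v) \<Rightarrow> ('e \<Rightarrow> 'v) \<Rightarrow> bool" where
  "graph E0 E1 s r \<longleftrightarrow> s ` E1 \<subseteq> E0 \<and> r ` E1 \<subseteq> E0"

text \<open>A finite path is represented as a pair (v, es): its source vertex v and its list of edges es.
  The pair (v, []) is the trivial path consisting of the vertex v.\<close>

definition is_path :: "'v set \<Rightarrow> 'e set \<Rightarrow> ('e \<Rightarrow> 'v) \<Rightarrow> ('e \<Rightarrow> 'v) \<Rightarrow> 'v \<times> 'e list \<Rightarrow> bool" where
  "is_path E0 E1 s r p \<longleftrightarrow> fst p \<in> E0 \<and> set (snd p) \<subseteq> E1 \<and>
     (snd p \<noteq> [] \<longrightarrow> s (hd (snd p)) = fst p) \<and>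
     (\<forall>i. Suc i < length (snd p) \<longrightarrow> r (snd p ! i) = s (snd p ! Suc i))"

definition path_range :: "('e \<Rightarrow> 'v) \<Rightarrow> 'v \<times> 'e list \<Rightarrow> 'v" where
  "path_range r p = (if snd p = [] then fst p else r (last (snd p)))"

definition path_verts :: "('e \<Rightarrow> 'v) \<Rightarrow> 'v \<times> 'e list \<Rightarrow> 'v set" where
  "path_verts r p = insert (fst p) (r ` set (snd p))"

definition reaches :: "'v set \<Rightarrow> 'e set \<Rightarrow> ('e \<Rightarrow> 'v) \<Rightarrow> ('e \<Rightarrow> 'v) \<Rightarrow> 'v \<Rightarrow> 'v \<Rightarrow> bool" where
  "reaches E0 E1 s r u w \<longleftrightarrow> (\<exists>p. is_path E0 E1 s r p \<and> fst p = u \<and> path_range r p = w)"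

definition tree :: "'v set \<Rightarrow> 'e set \<Rightarrow> ('e \<Rightarrow> 'v) \<Rightarrow> ('e \<Rightarrow> 'v) \<Rightarrow> 'v set \<Rightarrow> 'v set" where
  "tree E0 E1 s r V = {u \<in> E0. \<exists>v\<in>V. reaches E0 E1 s r v u}"

definition rtree :: "'v set \<Rightarrow> 'e set \<Rightarrow> ('e \<Rightarrow> 'v) \<Rightarrow> ('e \<Rightarrow> 'v) \<Rightarrow> 'v set \<Rightarrow> 'v set" where
  "rtree E0 E1 s r V = {u \<in> E0. \<exists>v\<in>V. reaches E0 E1 s r u v}"

definition emits :: "'e set \<Rightarrow> ('e \<Rightarrow> 'v) \<Rightarrow> 'v \<Rightarrow> 'e set" where
  "emits E1 s v = {e \<in> E1. s e = v}"

definition infinite_emitter :: "'v set \<Rightarrow> 'e set \<Rightarrow> ('e \<Rightarrow> 'v) \<Rightarrow> 'v \<Rightarrow> bool" where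
  "infinite_emitter E0 E1 s v \<longleftrightarrow> v \<in> E0 \<and> infinite (emits E1 s v)"

definition regular :: "'v set \<Rightarrow> 'e set \<Rightarrow> ('e \<Rightarrow> 'v) \<Rightarrow> 'v \<Rightarrow> bool" where
  "regular E0 E1 s v \<longleftrightarrow> v \<in> E0 \<and> emits E1 s v \<noteq> {} \<and> finite (emits E1 s v)"

definition hereditary :: "'v set \<Rightarrow> 'e set \<Rightarrow> ('e \<Rightarrow> 'v) \<Rightarrow> ('e \<Rightarrow> 'v) \<Rightarrow> 'v set \<Rightarrow> bool" where
  "hereditary E0 E1 s r H \<longleftrightarrow> tree E0 E1 s r H \<subseteq> H"

definition saturated :: "'v set \<Rightarrow> 'e set \<Rightarrow> ('e \<Rightarrow> 'v) \<Rightarrow> ('e \<Rightarrow> 'v) \<Rightarrow> 'v set \<Rightarrow> bool" where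
  "saturated E0 E1 s r H \<longleftrightarrow>
     (\<forall>v. regular E0 E1 s v \<and> r ` emits E1 s v \<subseteq> H \<longrightarrow> v \<in> H)"

definition hs_closure :: "'v set \<Rightarrow> 'e set \<Rightarrow> ('e \<Rightarrow> 'v) \<Rightarrow> ('e \<Rightarrow> 'v) \<Rightarrow> 'v set \<Rightarrow> 'v set" where
  "hs_closure E0 E1 s r V =
     \<Inter>{H. V \<subseteq> H \<and> H \<subseteq> E0 \<and> hereditary E0 E1 s r H \<and> saturated E0 E1 s r H}"

definition is_inf_path :: "'e set \<Rightarrow> ('e \<Rightarrow> 'v) \<Rightarrow> ('e \<Rightarrow> 'v) \<Rightarrow> (nat \<Rightarrow> 'e) \<Rightarrow> bool" where
  "is_inf_path E1 s r f \<longleftrightarrow> (\<forall>i. f i \<in> E1 \<and> r (f i) = s (f (Suc i)))"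

definition inf_path_verts :: "('e \<Rightarrow> 'v) \<Rightarrow> ('e \<Rightarrow> 'v) \<Rightarrow> (nat \<Rightarrow> 'e) \<Rightarrow> 'v set" where
  "inf_path_verts s r f = range (s \<circ> f) \<union> range (r \<circ> f)"

text \<open>P_v(X): paths from v ending in X, no vertex of which other than the range
  (i.e. no source of an edge of the path) lies in X.\<close>
definition paths_into :: "'v set \<Rightarrow> 'e set \<Rightarrow> ('e \<Rightarrow> 'v) \<Rightarrow> ('e \<Rightarrow> 'v) \<Rightarrow> 'v \<Rightarrow> 'v set
    \<Rightarrow> ('v \<times> 'e list) set" where
  "paths_into E0 E1 s r v X = {p. is_path E0 E1 s r p \<and> fst p = v \<and> path_range r p \<in> X \<and>
      (\<forall>e\<in>set (snd p). s e \<notin> X)}"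

end

theory Submission imports Defs begin

locale grph =
  fixes E0 :: "'v set" and E1 :: "'e set" and s r :: "'e \<Rightarrow> 'v"
  assumes g: "graph E0 E1 s r"
begin

definition Erel where "Erel = {(s e, r e) | e. e \<in> E1}"

lemma sE0: "e \<in> E1 \<Longrightarrow> s e \<in> E0" and rE0: "e \<in> E1 \<Longrightarrow> r e \<in> E0"
  using g unfolding graph_def by auto

lemma is_path_Cons:
  "is_path E0 E1 s r (v, e#es) \<longleftrightarrow> e \<in> E1 \<and> s e = v \<and> is_path E0 E1 s r (r e, es)"
proof
  assume a: "is_path E0 E1 s r (v, e#es)"
  have idx: "\<And>i. Suc i < length (e#es) \<Longrightarrow> r ((e#es) ! i) = s ((e#es) ! Suc i)"
    using a unfolding is_path_def by auto
  have "es \<noteq> [] \<Longrightarrow> s (hd es) = r e" using idx[of 0] by (cases es) auto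
  moreover have "\<And>i. Suc i < length es \<Longrightarrow> r (es ! i) = s (es ! Suc i)"
    using idx by (metis Suc_less_eq length_Cons nth_Cons_Suc)
  ultimately show "e \<in> E1 \<and> s e = v \<and> is_path E0 E1 s r (r e, es)"
    using a rE0 unfolding is_path_def by auto
next
  assume a: "e \<in> E1 \<and> s e = v \<and> is_path E0 E1 s r (r e, es)"
  have "\<And>i. Suc i < length (e#es) \<Longrightarrow> r ((e#es) ! i) = s ((e#es) ! Suc i)"
  proof -
    fix i assume "Suc i < length (e#es)"
    then show "r ((e#es) ! i) = s ((e#es) ! Suc i)"
      using a unfolding is_path_def by (cases i) (auto simp: hd_conv_nth)
  qed
  then show "is_path E0 E1 s r (v, e#es)" using a sE0 unfolding is_path_def by auto
qed

lemma path_range_Cons: "path_range r (v, e#es) = path_range r (r e, es)"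
  unfolding path_range_def by auto

lemma path_rtrancl: "is_path E0 E1 s r (u, es) \<Longrightarrow> (u, path_range r (u, es)) \<in> Erel\<^sup>*"
proof (induction es arbitrary: u)
  case Nil then show ?case by (simp add: path_range_def)
next
  case (Cons e es)
  then have "e \<in> E1" "s e = u" "is_path E0 E1 s r (r e, es)" by (auto simp: is_path_Cons)
  with Cons.IH have "(r e, path_range r (r e, es)) \<in> Erel\<^sup>*" by blast
  moreover have "(u, r e) \<in> Erel" using \<open>e \<in> E1\<close> \<open>s e = u\<close> unfolding Erel_def by blast
  ultimately show ?case by (simp add: path_range_Cons converse_rtrancl_into_rtrancl)
qed

lemma rtrancl_path: "(u,w) \<in> Erel\<^sup>* \<Longrightarrow> u \<in> E0 \<Longrightarrow> \<exists>es. is_path E0 E1 s r (u,es) \<and> path_range r (u,es) = w"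
proof (induction rule: converse_rtrancl_induct)
  case base
  then show ?case by (intro exI[of _ "[]"]) (simp add: is_path_def path_range_def)
next
  case (step y z)
  then obtain e where e: "e \<in> E1" "y = s e" "z = r e" unfolding Erel_def by blast
  with step rE0 obtain es where "is_path E0 E1 s r (z,es)" "path_range r (z,es) = w" by blast
  then show ?case using e by (intro exI[of _ "e#es"]) (simp add: is_path_Cons path_range_Cons)
qed

lemma rtrancl_E0: "(u,w) \<in> Erel\<^sup>* \<Longrightarrow> u \<in> E0 \<Longrightarrow> w \<in> E0"
  by (induction rule: rtrancl_induct) (auto simp: Erel_def rE0)

lemma reaches_iff: "reaches E0 E1 s r u w \<longleftrightarrow> u \<in> E0 \<and> (u,w) \<in> Erel\<^sup>*"
  unfolding reaches_def
  by (metis is_path_def path_rtrancl prod.collapse rtrancl_path fst_conv)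

lemma tree_iff: "u \<in> tree E0 E1 s r X \<longleftrightarrow> (\<exists>v\<in>X. v \<in> E0 \<and> (v,u) \<in> Erel\<^sup>*)"
  unfolding tree_def reaches_iff using rtrancl_E0 by blast

lemma rtree_iff: "u \<in> rtree E0 E1 s r X \<longleftrightarrow> u \<in> E0 \<and> (\<exists>v\<in>X. (u,v) \<in> Erel\<^sup>*)"
  unfolding rtree_def reaches_iff by blast

lemma tree_sub: "X \<subseteq> E0 \<Longrightarrow> X \<subseteq> tree E0 E1 s r X"
  unfolding subset_iff tree_iff by blast

lemma tree_mono: "X \<subseteq> Y \<Longrightarrow> tree E0 E1 s r X \<subseteq> tree E0 E1 s r Y"
  unfolding tree_def by blast

lemma her_step: "hereditary E0 E1 s r H \<Longrightarrow> s e \<in> H \<Longrightarrow> e \<in> E1 \<Longrightarrow> r e \<in> H"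
proof -
  assume h: "hereditary E0 E1 s r H" "s e \<in> H" "e \<in> E1"
  have "(s e, r e) \<in> Erel\<^sup>*" using h(3) unfolding Erel_def by blast
  then have "r e \<in> tree E0 E1 s r H" using h sE0 unfolding tree_iff by blast
  then show ?thesis using h unfolding hereditary_def by blast
qed

lemma step_her: "(\<And>e. e \<in> E1 \<Longrightarrow> s e \<in> X \<Longrightarrow> r e \<in> X) \<Longrightarrow> hereditary E0 E1 s r X"
proof -
  assume st: "\<And>e. e \<in> E1 \<Longrightarrow> s e \<in> X \<Longrightarrow> r e \<in> X"
  have "(v,u) \<in> Erel\<^sup>* \<Longrightarrow> v \<in> X \<Longrightarrow> u \<in> X" for u v
    by (induction rule: rtrancl_induct) (auto simp: Erel_def st)
  then show ?thesis unfolding hereditary_def by (auto simp: tree_iff)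
qed

lemma tree_her: "hereditary E0 E1 s r (tree E0 E1 s r X)"
  by (rule step_her) (auto simp: tree_iff Erel_def intro: rtrancl_into_rtrancl)

end

locale grphV = grph E0 E1 s r for E0 :: "'v set" and E1 :: "'e set" and s r :: "'e \<Rightarrow> 'v" +
  fixes V :: "'v set"
  assumes VE0: "V \<subseteq> E0"
begin

abbreviation "T \<equiv> tree E0 E1 s r V"
abbreviation "C \<equiv> hs_closure E0 E1 s r V"

inductive_set L where
  Lbase: "v \<in> T \<Longrightarrow> v \<in> L"
| Lreg: "regular E0 E1 s v \<Longrightarrow> \<forall>e\<in>emits E1 s v. r e \<in> L \<Longrightarrow> v \<in> L"

lemma T_E0: "T \<subseteq> E0" unfolding tree_def by blast

lemma L_E0: "v \<in> L \<Longrightarrow> v \<in> E0"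
  by (induction rule: L.induct) (use T_E0 in \<open>auto simp: regular_def\<close>)

lemma L_her: "hereditary E0 E1 s r L"
proof (rule step_her)
  fix e assume e: "e \<in> E1" "s e \<in> L"
  from e(2) show "r e \<in> L"
  proof (cases rule: L.cases)
    case Lbase then show ?thesis using her_step[OF tree_her] e by (blast intro: L.Lbase)
  next
    case Lreg then show ?thesis using e unfolding emits_def by blast
  qed
qed

lemma L_sat: "saturated E0 E1 s r L"
  unfolding saturated_def by (blast intro: L.Lreg)

lemma C_eq_L: "C = L"
proof
  have "V \<subseteq> L" using tree_sub[OF VE0] by (blast intro: L.Lbase)
  moreover have "L \<subseteq> E0" using L_E0 by blast
  ultimately have "L \<in> {H. V \<subseteq> H \<and> H \<subseteq> E0 \<and> hereditary E0 E1 s r H \<and> saturated E0 E1 s r H}"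
    using L_her L_sat by blast
  then show "C \<subseteq> L" unfolding hs_closure_def by (rule Inter_lower)
next
  show "L \<subseteq> C"
  proof
    fix v assume "v \<in> L"
    then show "v \<in> C"
    proof (induction rule: L.induct)
      case (Lbase v)
      show ?case unfolding hs_closure_def
      proof (rule InterI)
        fix H assume "H \<in> {H. V \<subseteq> H \<and> H \<subseteq> E0 \<and> hereditary E0 E1 s r H \<and> saturated E0 E1 s r H}"
        then have "V \<subseteq> H" "hereditary E0 E1 s r H" by auto
        then show "v \<in> H" using Lbase tree_mono[of V H] unfolding hereditary_def by blast
      qed
    next
      case (Lreg v)
      show ?case unfolding hs_closure_def
      proof (rule InterI)
        fix H assume H: "H \<in> {H. V \<subseteq> H \<and> H \<subseteq> E0 \<and> hereditary E0 E1 s r H \<and> saturated E0 E1 s r H}"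
        then have "saturated E0 E1 s r H" by auto
        moreover have "r ` emits E1 s v \<subseteq> H"
          using Lreg.IH H unfolding hs_closure_def by blast
        ultimately show "v \<in> H" using Lreg.hyps unfolding saturated_def by blast
      qed
    qed
  qed
qed

lemma T_C: "T \<subseteq> C" using C_eq_L by (blast intro: L.Lbase)

lemma C_sat: "saturated E0 E1 s r C" using C_eq_L L_sat by simp

lemma one_two_a: "v \<in> C \<Longrightarrow> v \<notin> T \<Longrightarrow> \<not> infinite_emitter E0 E1 s v"
  unfolding C_eq_L by (erule L.cases) (auto simp: regular_def infinite_emitter_def)

lemma L_infpath: "v \<in> L \<Longrightarrow> \<forall>f. is_inf_path E1 s r f \<and> s (f 0) = v \<longrightarrow> inf_path_verts s r f \<inter> T \<noteq> {}"
proof (induction rule: L.induct)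
  case (Lbase v)
  then show ?case unfolding inf_path_verts_def by auto
next
  case (Lreg v)
  show ?case
  proof (intro allI impI)
    fix f assume f: "is_inf_path E1 s r f \<and> s (f 0) = v"
    let ?g = "\<lambda>i. f (Suc i)"
    define w where "w = r (f 0)"
    have "f 0 \<in> emits E1 s v" using f unfolding is_inf_path_def emits_def by auto
    then have IH: "\<forall>h. is_inf_path E1 s r h \<and> s (h 0) = w \<longrightarrow> inf_path_verts s r h \<inter> T \<noteq> {}"
      using Lreg.IH unfolding w_def by blast
    have "is_inf_path E1 s r ?g" "s (?g 0) = w"
      using f unfolding is_inf_path_def w_def by auto
    then have "inf_path_verts s r ?g \<inter> T \<noteq> {}" using IH by blast
    moreover have "inf_path_verts s r ?g \<subseteq> inf_path_verts s r f"
      unfolding inf_path_verts_def by auto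
    ultimately show "inf_path_verts s r f \<inter> T \<noteq> {}" by blast
  qed
qed

lemma one_two_b: "is_inf_path E1 s r f \<Longrightarrow> s (f 0) \<in> C \<Longrightarrow> inf_path_verts s r f \<inter> T \<noteq> {}"
  using L_infpath[of "s (f 0)"] C_eq_L by blast

lemma paths_into_Cons: "(v, e#es) \<in> paths_into E0 E1 s r v X \<longleftrightarrow>
   e \<in> E1 \<and> s e = v \<and> v \<notin> X \<and> (r e, es) \<in> paths_into E0 E1 s r (r e) X"
  unfolding paths_into_def by (auto simp: is_path_Cons path_range_Cons)

lemma paths_into_T: "v \<in> X \<Longrightarrow> paths_into E0 E1 s r v X \<subseteq> {(v,[])}"
proof
  fix p assume "p \<in> paths_into E0 E1 s r v X" and vX: "v \<in> X"
  then obtain es where p: "p = (v, es)" "is_path E0 E1 s r (v, es)" "\<forall>e\<in>set es. s e \<notin> X"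
    unfolding paths_into_def by (cases p) auto
  have "es = []"
  proof (rule ccontr)
    assume "es \<noteq> []"
    then obtain e es' where "es = e # es'" by (cases es) auto
    then show False using p vX by (auto simp: is_path_Cons)
  qed
  then show "p \<in> {(v,[])}" using p by simp
qed

lemma one_three_L: "v \<in> L \<Longrightarrow> finite (paths_into E0 E1 s r v T)"
proof (induction rule: L.induct)
  case (Lbase v)
  then show ?case using paths_into_T finite_subset by blast
next
  case (Lreg v)
  show ?case
  proof (cases "v \<in> T")
    case True
    then show ?thesis using paths_into_T finite_subset by blast
  next
    case False
    have sub: "paths_into E0 E1 s r v T \<subseteq>
      (\<lambda>(e,q). (v, e # snd q)) ` (SIGMA e:emits E1 s v. paths_into E0 E1 s r (r e) T)"
    proof
      fix p assume p: "p \<in> paths_into E0 E1 s r v T"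
      obtain es where pe: "p = (v, es)" using p unfolding paths_into_def by (cases p) auto
      have "es \<noteq> []" using p pe False unfolding paths_into_def path_range_def by auto
      then obtain e es' where "es = e # es'" by (cases es) auto
      with p pe have "e \<in> emits E1 s v" "(r e, es') \<in> paths_into E0 E1 s r (r e) T"
        by (auto simp: paths_into_Cons emits_def)
      then show "p \<in> (\<lambda>(e,q). (v, e # snd q)) ` (SIGMA e:emits E1 s v. paths_into E0 E1 s r (r e) T)"
        using pe \<open>es = e # es'\<close> by (auto intro!: image_eqI[of _ _ "(e, (r e, es'))"])
    qed
    have "finite (emits E1 s v)" using Lreg.hyps unfolding regular_def by blast
    moreover have "\<forall>e\<in>emits E1 s v. finite (paths_into E0 E1 s r (r e) T)" using Lreg.IH by blast
    ultimately show ?thesis using sub finite_subset by blast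
  qed
qed

end

context grphV begin

lemma inf_path_exists:
  assumes "v0 \<in> A" "\<forall>u\<in>A. \<exists>e\<in>E1. s e = u \<and> r e \<in> A"
  shows "\<exists>f. is_inf_path E1 s r f \<and> inf_path_verts s r f \<subseteq> A"
proof -
  obtain g where g: "\<forall>u\<in>A. g u \<in> E1 \<and> s (g u) = u \<and> r (g u) \<in> A"
    using assms(2) by metis
  define x where "x n = ((\<lambda>u. r (g u)) ^^ n) v0" for n
  have xA: "x n \<in> A" for n
    by (induction n) (use assms(1) g in \<open>auto simp: x_def\<close>)
  have xS: "x (Suc n) = r (g (x n))" for n by (simp add: x_def)
  have "is_inf_path E1 s r (g \<circ> x)"
    unfolding is_inf_path_def using g xA xS by auto
  moreover have "inf_path_verts s r (g \<circ> x) \<subseteq> A"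
    unfolding inf_path_verts_def using g xA by auto
  ultimately show ?thesis by blast
qed

lemma two_one:
  assumes her: "hereditary E0 E1 s r H" and CH: "C \<subseteq> H"
    and HR: "H \<subseteq> rtree E0 E1 s r T"
    and em: "\<forall>v\<in>H - T. \<not> infinite_emitter E0 E1 s v"
    and ip: "\<forall>f. is_inf_path E1 s r f \<and> inf_path_verts s r f \<subseteq> H \<longrightarrow> inf_path_verts s r f \<inter> T \<noteq> {}"
  shows "H \<subseteq> C"
proof (rule ccontr)
  assume "\<not> H \<subseteq> C"
  then obtain v0 where v0: "v0 \<in> H - C" by blast
  have step: "\<forall>u\<in>H - C. \<exists>e\<in>E1. s e = u \<and> r e \<in> H - C"
  proof
    fix u assume u: "u \<in> H - C"
    then have uT: "u \<notin> T" using T_C by blast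
    have "u \<in> rtree E0 E1 s r T" using u HR by blast
    then obtain w where w: "u \<in> E0" "w \<in> T" "(u,w) \<in> Erel\<^sup>*" unfolding rtree_iff by blast
    have "u \<noteq> w" using uT w by blast
    then obtain y where "(u,y) \<in> Erel" using w(3) by (auto elim: converse_rtranclE)
    then obtain e0 where "e0 \<in> E1" "s e0 = u" unfolding Erel_def by blast
    then have ne: "emits E1 s u \<noteq> {}" unfolding emits_def by blast
    have "finite (emits E1 s u)" using em u uT w(1) unfolding infinite_emitter_def by blast
    then have reg: "regular E0 E1 s u" using ne w(1) unfolding regular_def by blast
    have "\<not> r ` emits E1 s u \<subseteq> C" using C_sat reg u unfolding saturated_def by blast
    then obtain e where e: "e \<in> emits E1 s u" "r e \<notin> C" by blast
    then have "r e \<in> H" using her_step[OF her] u unfolding emits_def by blast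
    then show "\<exists>e\<in>E1. s e = u \<and> r e \<in> H - C" using e unfolding emits_def by blast
  qed
  obtain f where f: "is_inf_path E1 s r f" "inf_path_verts s r f \<subseteq> H - C"
    using inf_path_exists[OF v0 step] by blast
  then have "inf_path_verts s r f \<inter> T \<noteq> {}" using ip by blast
  then show False using f(2) T_C by blast
qed

lemma exists_path_into: "(u,w) \<in> Erel\<^sup>* \<Longrightarrow> w \<in> T \<Longrightarrow> u \<in> E0 \<Longrightarrow> \<exists>q. q \<in> paths_into E0 E1 s r u T"
proof (induction rule: converse_rtrancl_induct)
  case base
  then show ?case
    by (intro exI[of _ "(w,[])"]) (auto simp: paths_into_def is_path_def path_range_def)
next
  case (step y z)
  then obtain e where e: "e \<in> E1" "y = s e" "z = r e" unfolding Erel_def by blast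
  show ?case
  proof (cases "y \<in> T")
    case True
    then show ?thesis using step
      by (intro exI[of _ "(y,[])"]) (auto simp: paths_into_def is_path_def path_range_def)
  next
    case False
    obtain q where q: "q \<in> paths_into E0 E1 s r z T" using step e rE0 by blast
    then have "fst q = z" unfolding paths_into_def by blast
    then have "(r e, snd q) \<in> paths_into E0 E1 s r (r e) T" using q e by (metis prod.collapse)
    then have "(y, e # snd q) \<in> paths_into E0 E1 s r y T"
      using e False by (simp add: paths_into_Cons)
    then show ?thesis by blast
  qed
qed

lemma three_two:
  assumes her: "hereditary E0 E1 s r H"
    and HR: "H \<subseteq> rtree E0 E1 s r T"
    and fin: "\<forall>v\<in>H. finite (paths_into E0 E1 s r v T)"
  shows "(\<forall>v\<in>H - T. \<not> infinite_emitter E0 E1 s v) \<and>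
    (\<forall>f. is_inf_path E1 s r f \<and> inf_path_verts s r f \<subseteq> H \<longrightarrow> inf_path_verts s r f \<inter> T \<noteq> {})"
proof -
  define Q where "Q w = (SOME q. q \<in> paths_into E0 E1 s r w T)" for w
  have Q: "Q w \<in> paths_into E0 E1 s r w T" if "w \<in> H" for w
  proof -
    have "w \<in> rtree E0 E1 s r T" using that HR by blast
    then obtain t where "w \<in> E0" "t \<in> T" "(w,t) \<in> Erel\<^sup>*" unfolding rtree_iff by blast
    then have "\<exists>q. q \<in> paths_into E0 E1 s r w T" using exists_path_into by blast
    then show ?thesis unfolding Q_def by (rule someI_ex)
  qed
  have Q': "(w, snd (Q w)) \<in> paths_into E0 E1 s r w T" if "w \<in> H" for w
  proof -
    have "fst (Q w) = w" using Q[OF that] unfolding paths_into_def by blast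
    then show ?thesis using Q[OF that] by (metis prod.collapse)
  qed
  have A: "\<not> infinite_emitter E0 E1 s u" if u: "u \<in> H - T" for u
  proof
    assume ie: "infinite_emitter E0 E1 s u"
    define \<phi> where "\<phi> e = (u, e # snd (Q (r e)))" for e
    have "inj_on \<phi> (emits E1 s u)" unfolding inj_on_def \<phi>_def by auto
    moreover have "\<phi> ` emits E1 s u \<subseteq> paths_into E0 E1 s r u T"
    proof
      fix p assume "p \<in> \<phi> ` emits E1 s u"
      then obtain e where e: "e \<in> E1" "s e = u" "p = \<phi> e" unfolding emits_def by blast
      then have "r e \<in> H" using her_step[OF her] u by blast
      then show "p \<in> paths_into E0 E1 s r u T"
        using Q'[of "r e"] e u unfolding \<phi>_def by (simp add: paths_into_Cons)
    qed
    moreover have "finite (paths_into E0 E1 s r u T)" using fin u by blast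
    ultimately have "finite (emits E1 s u)"
      using finite_subset finite_imageD by blast
    then show False using ie unfolding infinite_emitter_def by blast
  qed
  have B: "inf_path_verts s r f \<inter> T \<noteq> {}"
    if f: "is_inf_path E1 s r f" "inf_path_verts s r f \<subseteq> H" for f
  proof
    assume disj: "inf_path_verts s r f \<inter> T = {}"
    have sH: "s (f k) \<in> H" "s (f k) \<notin> T" for k
      using f(2) disj unfolding inf_path_verts_def by auto
    have fk: "f k \<in> E1" "r (f k) = s (f (Suc k))" for k using f(1) unfolding is_inf_path_def by auto
    have P: "(s (f k), map f [k..<k+n] @ snd (Q (s (f (k+n))))) \<in> paths_into E0 E1 s r (s (f k)) T" for n k
    proof (induction n arbitrary: k)
      case 0
      then show ?case using Q'[OF sH(1)] by simp
    next
      case (Suc n)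
      have l: "[k..<k + Suc n] = k # [Suc k..<Suc k + n]" by (simp add: upt_conv_Cons)
      show ?case unfolding l using Suc.IH[of "Suc k"] fk[of k] sH(2)[of k]
        by (simp add: paths_into_Cons)
    qed
    let ?S = "paths_into E0 E1 s r (s (f 0)) T"
    have "finite ?S" using fin sH(1) by blast
    then have "finite ((\<lambda>p. length (snd p)) ` ?S)" by blast
    then obtain M where M: "\<forall>x\<in>(\<lambda>p. length (snd p)) ` ?S. x \<le> M"
      using finite_nat_set_iff_bounded_le by blast
    have "length (snd (s (f 0), map f [0..<0+Suc M] @ snd (Q (s (f (0+Suc M)))))) \<le> M"
      using M P[of 0 "Suc M"] by blast
    then show False by simp
  qed
  show ?thesis using A B by blast
qed

end

theorem lemma2p1:
  fixes E0 :: "'v set" and E1 :: "'e set" and s r :: "'e \<Rightarrow> 'v" and V H :: "'v set"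
  assumes "graph E0 E1 s r"
    and "V \<subseteq> E0"
    and "hereditary E0 E1 s r H"
    and "hs_closure E0 E1 s r V \<subseteq> H"
    and "H \<subseteq> rtree E0 E1 s r (tree E0 E1 s r V)"
  shows "(H = hs_closure E0 E1 s r V
      \<longleftrightarrow> (\<forall>v\<in>H - tree E0 E1 s r V. \<not> infinite_emitter E0 E1 s v) \<and>
          (\<forall>f. is_inf_path E1 s r f \<and> inf_path_verts s r f \<subseteq> H
               \<longrightarrow> inf_path_verts s r f \<inter> tree E0 E1 s r V \<noteq> {}))
    \<and> (H = hs_closure E0 E1 s r V
      \<longleftrightarrow> (\<forall>v\<in>H. finite (paths_into E0 E1 s r v (tree E0 E1 s r V))))"
proof -
  interpret grphV E0 E1 s r V using assms(1,2) by unfold_locales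
  have d12: "(\<forall>v\<in>H - T. \<not> infinite_emitter E0 E1 s v) \<and>
          (\<forall>f. is_inf_path E1 s r f \<and> inf_path_verts s r f \<subseteq> H
               \<longrightarrow> inf_path_verts s r f \<inter> T \<noteq> {})" if "H = C"
  proof -
    have "\<forall>v\<in>H - T. \<not> infinite_emitter E0 E1 s v" using one_two_a that by blast
    moreover have "\<forall>f. is_inf_path E1 s r f \<and> inf_path_verts s r f \<subseteq> H
               \<longrightarrow> inf_path_verts s r f \<inter> T \<noteq> {}"
    proof (intro allI impI)
      fix f assume f: "is_inf_path E1 s r f \<and> inf_path_verts s r f \<subseteq> H"
      then have "s (f 0) \<in> C" using that unfolding inf_path_verts_def by auto
      then show "inf_path_verts s r f \<inter> T \<noteq> {}" using one_two_b f by blast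
    qed
    ultimately show ?thesis by blast
  qed
  have d13: "\<forall>v\<in>H. finite (paths_into E0 E1 s r v T)" if "H = C"
    using one_three_L C_eq_L that by blast
  have d21: "H = C" if "(\<forall>v\<in>H - T. \<not> infinite_emitter E0 E1 s v) \<and>
          (\<forall>f. is_inf_path E1 s r f \<and> inf_path_verts s r f \<subseteq> H
               \<longrightarrow> inf_path_verts s r f \<inter> T \<noteq> {})"
    using two_one[OF assms(3,4,5)] that assms(4) by blast
  have d32: "(\<forall>v\<in>H - T. \<not> infinite_emitter E0 E1 s v) \<and>
          (\<forall>f. is_inf_path E1 s r f \<and> inf_path_verts s r f \<subseteq> H
               \<longrightarrow> inf_path_verts s r f \<inter> T \<noteq> {})"
    if "\<forall>v\<in>H. finite (paths_into E0 E1 s r v T)"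
    using three_two[OF assms(3,5) that] .
  show ?thesis using d12 d13 d21 d32 by blast
qed

end
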